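(* Let $K$ be a finite group with trivial centre. Suppose there exist subgroups $X$, $Y$ of $\mathrm{Aut}(K)$ such that $X\cap Y = 1$ and $XY = X\,\mathrm{Inn}(K) = Y\,\mathrm{Inn}(K)$. Then there exists a skew left brace with additive group isomorphic to $K$ whose multiplicative group is isomorphic to a subdirect product of $X$ and $Y$.
   Context: A skew left brace is a set $B$ with two group structures $(B,+)$ (not necessarily abelian) and $(B,\cdot)$ such that $a(b+c) = ab - a + ac$ for all $a,b,c\in B$; its additive group is $(B,+)$ and its multiplicative group is $(B,\cdot)$. $\mathrm{Inn}(K)$ is the group of inner automorphisms of $K$. A subdirect product of groups $X$ and $Y$ is a subgroup $W\le X\times Y$ whose projections onto $X$ and onto $Y$ are both surjective. *)

theory Defs
  imports "HOL-Algebra.Algebra"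
begin

definition group_center :: "('a, 'b) monoid_scheme \<Rightarrow> 'a set" where
  "group_center K = {z \<in> carrier K. \<forall>x \<in> carrier K. z \<otimes>\<^bsub>K\<^esub> x = x \<otimes>\<^bsub>K\<^esub> z}"

text \<open>Inner automorphism induced by g (extensional, as elements of AutoGroup K).\<close>
definition inner_aut :: "('a, 'b) monoid_scheme \<Rightarrow> 'a \<Rightarrow> ('a \<Rightarrow> 'a)" where
  "inner_aut K g = (\<lambda>x \<in> carrier K. g \<otimes>\<^bsub>K\<^esub> x \<otimes>\<^bsub>K\<^esub> inv\<^bsub>K\<^esub> g)"

definition Inn :: "('a, 'b) monoid_scheme \<Rightarrow> ('a \<Rightarrow> 'a) set" where
  "Inn K = inner_aut K ` carrier K"

text \<open>A skew left brace: additive group A and multiplicative group M on the same carrier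
  with a(b+c) = ab - a + ac.\<close>
definition skew_left_brace :: "'a monoid \<Rightarrow> 'a monoid \<Rightarrow> bool" where
  "skew_left_brace A M \<longleftrightarrow> group A \<and> group M \<and> carrier A = carrier M \<and>
    (\<forall>a \<in> carrier A. \<forall>b \<in> carrier A. \<forall>c \<in> carrier A.
       a \<otimes>\<^bsub>M\<^esub> (b \<otimes>\<^bsub>A\<^esub> c) =
       (a \<otimes>\<^bsub>M\<^esub> b) \<otimes>\<^bsub>A\<^esub> inv\<^bsub>A\<^esub> a \<otimes>\<^bsub>A\<^esub> (a \<otimes>\<^bsub>M\<^esub> c))"

definition subdirect_product :: "('a, 'c) monoid_scheme \<Rightarrow> ('b, 'd) monoid_scheme \<Rightarrow> ('a \<times> 'b) set \<Rightarrow> bool" where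
  "subdirect_product G1 G2 S \<longleftrightarrow> subgroup S (DirProd G1 G2) \<and> fst ` S = carrier G1 \<and> snd ` S = carrier G2"

end

theory Submission imports Defs begin

context group begin

lemma inv_cancel_l [simp]: "x \<in> carrier G \<Longrightarrow> y \<in> carrier G \<Longrightarrow> inv x \<otimes> (x \<otimes> y) = y"
  by (metis inv_closed l_inv l_one m_assoc)
lemma inv_cancel_r [simp]: "x \<in> carrier G \<Longrightarrow> y \<in> carrier G \<Longrightarrow> x \<otimes> (inv x \<otimes> y) = y"
  by (metis inv_closed r_inv l_one m_assoc)

lemma carrier_AutoGroup: "carrier (AutoGroup G) = auto G"
  by (simp add: AutoGroup_def)

lemma mult_AutoGroup: "f \<in> auto G \<Longrightarrow> g \<in> auto G \<Longrightarrow> f \<otimes>\<^bsub>AutoGroup G\<^esub> g = compose (carrier G) f g"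
  by (simp add: AutoGroup_def BijGroup_def auto_def)

lemma one_AutoGroup: "\<one>\<^bsub>AutoGroup G\<^esub> = (\<lambda>x\<in>carrier G. x)"
  by (simp add: AutoGroup_def BijGroup_def)

lemma inner_aut_apply [simp]: "x \<in> carrier G \<Longrightarrow> inner_aut G g x = g \<otimes> x \<otimes> inv g"
  by (simp add: inner_aut_def)

lemma inner_aut_auto: assumes g: "g \<in> carrier G" shows "inner_aut G g \<in> carrier (AutoGroup G)"
proof -
  have hom: "inner_aut G g \<in> hom G G"
    unfolding hom_def using g by (auto simp: m_assoc)
  have bij: "bij_betw (inner_aut G g) (carrier G) (carrier G)"
    by (rule bij_betw_byWitness[where f'="inner_aut G (inv g)"]) (use g in \<open>auto simp: m_assoc\<close>)
  show ?thesis using hom bij unfolding carrier_AutoGroup auto_def Bij_def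
    by (auto simp: inner_aut_def)
qed

lemma inner_aut_mult: assumes "a \<in> carrier G" "b \<in> carrier G"
  shows "inner_aut G a \<otimes>\<^bsub>AutoGroup G\<^esub> inner_aut G b = inner_aut G (a \<otimes> b)"
  using inner_aut_auto[OF assms(1)] inner_aut_auto[OF assms(2)] assms
  by (auto simp: mult_AutoGroup carrier_AutoGroup compose_def inner_aut_def m_assoc inv_mult_group intro!: ext)

lemma inner_aut_one: "inner_aut G \<one> = \<one>\<^bsub>AutoGroup G\<^esub>"
  by (auto simp: one_AutoGroup inner_aut_def intro!: ext)

lemma auto_inner: assumes al: "\<alpha> \<in> carrier (AutoGroup G)" and k: "k \<in> carrier G"
  shows "\<alpha> \<otimes>\<^bsub>AutoGroup G\<^esub> inner_aut G k = inner_aut G (\<alpha> k) \<otimes>\<^bsub>AutoGroup G\<^esub> \<alpha>"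
proof -
  have a: "\<alpha> \<in> auto G" using al carrier_AutoGroup by simp
  then have h: "\<alpha> \<in> hom G G" and b: "\<alpha> \<in> Bij (carrier G)" by (auto simp: auto_def)
  interpret gh: group_hom G G \<alpha> using h by (unfold_locales) auto
  have ak: "\<alpha> k \<in> carrier G" using h k by (auto simp: hom_def)
  have i: "inner_aut G k \<in> auto G" "inner_aut G (\<alpha> k) \<in> auto G"
    using inner_aut_auto[OF k] inner_aut_auto[OF ak] carrier_AutoGroup by auto
  show ?thesis
    using a i k ak
    by (auto simp: mult_AutoGroup compose_def intro!: ext)
qed


lemma auto_closed: "\<alpha> \<in> carrier (AutoGroup G) \<Longrightarrow> k \<in> carrier G \<Longrightarrow> \<alpha> k \<in> carrier G"
  by (auto simp: carrier_AutoGroup auto_def hom_def)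

lemma auto_mult: "\<alpha> \<in> carrier (AutoGroup G) \<Longrightarrow> a \<in> carrier G \<Longrightarrow> b \<in> carrier G \<Longrightarrow> \<alpha> (a \<otimes> b) = \<alpha> a \<otimes> \<alpha> b"
  by (auto simp: carrier_AutoGroup auto_def hom_def)

lemma inner_aut_inv: assumes "k \<in> carrier G"
  shows "inv\<^bsub>AutoGroup G\<^esub> (inner_aut G k) = inner_aut G (inv k)"
proof -
  interpret AG: group "AutoGroup G" by (rule AutoGroup)
  show ?thesis
    using assms inner_aut_mult[of "inv k" k] inner_aut_one inner_aut_auto
    by (intro AG.inv_equality) auto
qed

lemma prod_form:
  assumes a: "a \<in> carrier G" and b: "b \<in> carrier G"
    and y: "y \<in> carrier (AutoGroup G)" and y': "y' \<in> carrier (AutoGroup G)"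
  shows "(inner_aut G a \<otimes>\<^bsub>AutoGroup G\<^esub> y) \<otimes>\<^bsub>AutoGroup G\<^esub> (inner_aut G b \<otimes>\<^bsub>AutoGroup G\<^esub> y')
       = inner_aut G (a \<otimes> y b) \<otimes>\<^bsub>AutoGroup G\<^esub> (y \<otimes>\<^bsub>AutoGroup G\<^esub> y')"
proof -
  interpret AG: group "AutoGroup G" by (rule AutoGroup)
  have ca: "inner_aut G a \<in> carrier (AutoGroup G)" and cb: "inner_aut G b \<in> carrier (AutoGroup G)"
    and cyb: "inner_aut G (y b) \<in> carrier (AutoGroup G)"
    using a b y by (auto intro: inner_aut_auto auto_closed)
  have "(inner_aut G a \<otimes>\<^bsub>AutoGroup G\<^esub> y) \<otimes>\<^bsub>AutoGroup G\<^esub> (inner_aut G b \<otimes>\<^bsub>AutoGroup G\<^esub> y')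
     = inner_aut G a \<otimes>\<^bsub>AutoGroup G\<^esub> ((y \<otimes>\<^bsub>AutoGroup G\<^esub> inner_aut G b) \<otimes>\<^bsub>AutoGroup G\<^esub> y')"
    using ca cb y y' by (simp add: AG.m_assoc)
  also have "\<dots> = inner_aut G a \<otimes>\<^bsub>AutoGroup G\<^esub> ((inner_aut G (y b) \<otimes>\<^bsub>AutoGroup G\<^esub> y) \<otimes>\<^bsub>AutoGroup G\<^esub> y')"
    using auto_inner[OF y b] by simp
  also have "\<dots> = (inner_aut G a \<otimes>\<^bsub>AutoGroup G\<^esub> inner_aut G (y b)) \<otimes>\<^bsub>AutoGroup G\<^esub> (y \<otimes>\<^bsub>AutoGroup G\<^esub> y')"
    using ca cyb y y' by (simp add: AG.m_assoc)
  also have "\<dots> = inner_aut G (a \<otimes> y b) \<otimes>\<^bsub>AutoGroup G\<^esub> (y \<otimes>\<^bsub>AutoGroup G\<^esub> y')"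
    using inner_aut_mult a b y auto_closed by simp
  finally show ?thesis .
qed

end

lemma inner_aut_inj:
  assumes K: "group K" and Z: "group_center K = {\<one>\<^bsub>K\<^esub>}"
    and a: "a \<in> carrier K" and b: "b \<in> carrier K" and e: "inner_aut K a = inner_aut K b"
  shows "a = b"
proof -
  interpret group K by (rule K)
  let ?z = "inv\<^bsub>K\<^esub> b \<otimes>\<^bsub>K\<^esub> a"
  have zc: "?z \<in> carrier K" using a b by simp
  have "?z \<otimes>\<^bsub>K\<^esub> x = x \<otimes>\<^bsub>K\<^esub> ?z" if x: "x \<in> carrier K" for x
  proof -
    have "a \<otimes>\<^bsub>K\<^esub> x \<otimes>\<^bsub>K\<^esub> inv\<^bsub>K\<^esub> a = b \<otimes>\<^bsub>K\<^esub> x \<otimes>\<^bsub>K\<^esub> inv\<^bsub>K\<^esub> b"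
      using fun_cong[OF e, of x] x by simp
    then have "inv\<^bsub>K\<^esub> b \<otimes>\<^bsub>K\<^esub> (a \<otimes>\<^bsub>K\<^esub> x \<otimes>\<^bsub>K\<^esub> inv\<^bsub>K\<^esub> a) \<otimes>\<^bsub>K\<^esub> a = inv\<^bsub>K\<^esub> b \<otimes>\<^bsub>K\<^esub> (b \<otimes>\<^bsub>K\<^esub> x \<otimes>\<^bsub>K\<^esub> inv\<^bsub>K\<^esub> b) \<otimes>\<^bsub>K\<^esub> a"
      by simp
    then show ?thesis using a b x by (simp add: m_assoc)
  qed
  then have "?z \<in> group_center K" using zc by (simp add: group_center_def)
  then have "?z = \<one>\<^bsub>K\<^esub>" using Z by simp
  then show ?thesis using a b by (metis inv_cancel_r r_one)
qed


theorem mainTheorem2: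
  fixes K :: "('a, 'b) monoid_scheme"
    and Xs Ys :: "('a \<Rightarrow> 'a) set"
  assumes "group K"
    and "finite (carrier K)"
    and "group_center K = {\<one>\<^bsub>K\<^esub>}"
    and "subgroup Xs (AutoGroup K)"
    and "subgroup Ys (AutoGroup K)"
    and "Xs \<inter> Ys = {\<one>\<^bsub>AutoGroup K\<^esub>}"
    and "Xs <#>\<^bsub>AutoGroup K\<^esub> Ys = Xs <#>\<^bsub>AutoGroup K\<^esub> Inn K"
    and "Xs <#>\<^bsub>AutoGroup K\<^esub> Ys = Ys <#>\<^bsub>AutoGroup K\<^esub> Inn K"
  shows "\<exists>(A :: 'a monoid) (M :: 'a monoid) Ws.
           skew_left_brace A M \<and> A \<cong> K \<and>
           subdirect_product ((AutoGroup K)\<lparr>carrier := Xs\<rparr>) ((AutoGroup K)\<lparr>carrier := Ys\<rparr>) Ws \<and>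
           M \<cong> (DirProd ((AutoGroup K)\<lparr>carrier := Xs\<rparr>) ((AutoGroup K)\<lparr>carrier := Ys\<rparr>))\<lparr>carrier := Ws\<rparr>"
proof -
  note K = assms(1) and Z = assms(3) and sX = assms(4) and sY = assms(5) and XY = assms(6)
    and e1 = assms(7) and e2 = assms(8)
  interpret K: group K by (rule K)
  interpret AG: group "AutoGroup K" by (rule K.AutoGroup)
  let ?AG = "AutoGroup K"
  define c where "c = inner_aut K"
  have cc: "k \<in> carrier K \<Longrightarrow> c k \<in> carrier ?AG" for k
    unfolding c_def by (rule K.inner_aut_auto)
  have cmult: "a \<in> carrier K \<Longrightarrow> b \<in> carrier K \<Longrightarrow> c a \<otimes>\<^bsub>?AG\<^esub> c b = c (a \<otimes>\<^bsub>K\<^esub> b)" for a b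
    unfolding c_def by (rule K.inner_aut_mult)
  have cone: "c \<one>\<^bsub>K\<^esub> = \<one>\<^bsub>?AG\<^esub>" unfolding c_def by (rule K.inner_aut_one)
  have cinv: "k \<in> carrier K \<Longrightarrow> inv\<^bsub>?AG\<^esub> (c k) = c (inv\<^bsub>K\<^esub> k)" for k
    unfolding c_def by (rule K.inner_aut_inv)
  have cinj: "a \<in> carrier K \<Longrightarrow> b \<in> carrier K \<Longrightarrow> c a = c b \<Longrightarrow> a = b" for a b
    unfolding c_def using inner_aut_inj[OF K Z] by blast
  have auc: "\<alpha> \<otimes>\<^bsub>?AG\<^esub> c k = c (\<alpha> k) \<otimes>\<^bsub>?AG\<^esub> \<alpha>" if "\<alpha> \<in> carrier ?AG" "k \<in> carrier K" for \<alpha> k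
    unfolding c_def using K.auto_inner that .
  have acl: "\<alpha> \<in> carrier ?AG \<Longrightarrow> k \<in> carrier K \<Longrightarrow> \<alpha> k \<in> carrier K" for \<alpha> k
    by (rule K.auto_closed)
  have pf: "\<lbrakk>a \<in> carrier K; b \<in> carrier K; y \<in> carrier ?AG; y' \<in> carrier ?AG\<rbrakk> \<Longrightarrow>
      (c a \<otimes>\<^bsub>?AG\<^esub> y) \<otimes>\<^bsub>?AG\<^esub> (c b \<otimes>\<^bsub>?AG\<^esub> y') = c (a \<otimes>\<^bsub>K\<^esub> y b) \<otimes>\<^bsub>?AG\<^esub> (y \<otimes>\<^bsub>?AG\<^esub> y')"
    for a b y y' unfolding c_def by (rule K.prod_form)
  have Xc: "Xs \<subseteq> carrier ?AG" and Yc: "Ys \<subseteq> carrier ?AG"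
    using sX sY subgroup.subset by blast+
  have innK: "Inn K = c ` carrier K" unfolding Inn_def c_def ..

  define H1 where "H1 = ?AG\<lparr>carrier := Xs\<rparr>"
  define H2 where "H2 = ?AG\<lparr>carrier := Ys\<rparr>"
  define D where "D = H1 \<times>\<times> H2"
  have gH1: "group H1" unfolding H1_def using sX AG.subgroup_imp_group by blast
  have gH2: "group H2" unfolding H2_def using sY AG.subgroup_imp_group by blast
  have gD: "group D" unfolding D_def using gH1 gH2 by (rule DirProd_group)
  interpret D: group D by (rule gD)
  have carD: "carrier D = Xs \<times> Ys" by (simp add: D_def H1_def H2_def)
  have multD: "(x1, y1) \<otimes>\<^bsub>D\<^esub> (x2, y2) = (x1 \<otimes>\<^bsub>?AG\<^esub> x2, y1 \<otimes>\<^bsub>?AG\<^esub> y2)" for x1 y1 x2 y2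
    by (simp add: D_def H1_def H2_def)
  have oneD: "\<one>\<^bsub>D\<^esub> = (\<one>\<^bsub>?AG\<^esub>, \<one>\<^bsub>?AG\<^esub>)" by (simp add: D_def H1_def H2_def)
  have invD: "x \<in> Xs \<Longrightarrow> y \<in> Ys \<Longrightarrow> inv\<^bsub>D\<^esub> (x, y) = (inv\<^bsub>?AG\<^esub> x, inv\<^bsub>?AG\<^esub> y)" for x y
    unfolding D_def using gH1 gH2 sX sY by (simp add: H1_def H2_def)

  define W where "W = {(x, y). x \<in> Xs \<and> y \<in> Ys \<and> (\<exists>k\<in>carrier K. x = c k \<otimes>\<^bsub>?AG\<^esub> y)}"

  have subW: "subgroup W D"
  proof (rule D.subgroupI)
    show "W \<subseteq> carrier D" by (auto simp: W_def carD)
    have "(\<one>\<^bsub>?AG\<^esub>, \<one>\<^bsub>?AG\<^esub>) \<in> W"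
      unfolding W_def using sX sY cone
      by (auto simp: subgroup.one_closed intro!: bexI[of _ "\<one>\<^bsub>K\<^esub>"])
    then show "W \<noteq> {}" by blast
  next
    fix w assume "w \<in> W"
    then obtain x y k where w: "w = (x, y)" and x: "x \<in> Xs" and y: "y \<in> Ys" and k: "k \<in> carrier K"
      and xe: "x = c k \<otimes>\<^bsub>?AG\<^esub> y" by (auto simp: W_def)
    have yc: "y \<in> carrier ?AG" using y Yc by auto
    have iyc: "inv\<^bsub>?AG\<^esub> y \<in> carrier ?AG" using yc by simp
    have "inv\<^bsub>?AG\<^esub> x = inv\<^bsub>?AG\<^esub> y \<otimes>\<^bsub>?AG\<^esub> c (inv\<^bsub>K\<^esub> k)"
      using xe yc cc[OF k] cinv[OF k] by (simp add: AG.inv_mult_group)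
    also have "\<dots> = c ((inv\<^bsub>?AG\<^esub> y) (inv\<^bsub>K\<^esub> k)) \<otimes>\<^bsub>?AG\<^esub> inv\<^bsub>?AG\<^esub> y"
      using auc[OF iyc] k by simp
    finally have "inv\<^bsub>?AG\<^esub> x = c ((inv\<^bsub>?AG\<^esub> y) (inv\<^bsub>K\<^esub> k)) \<otimes>\<^bsub>?AG\<^esub> inv\<^bsub>?AG\<^esub> y" .
    moreover have "(inv\<^bsub>?AG\<^esub> y) (inv\<^bsub>K\<^esub> k) \<in> carrier K" using acl[OF iyc] k by simp
    moreover have "inv\<^bsub>?AG\<^esub> x \<in> Xs" "inv\<^bsub>?AG\<^esub> y \<in> Ys"
      using x y sX sY by (auto simp: subgroup.m_inv_closed)
    ultimately show "inv\<^bsub>D\<^esub> w \<in> W"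
      unfolding invD[OF x y] w W_def by blast
  next
    fix w1 w2 assume "w1 \<in> W" "w2 \<in> W"
    then obtain x1 y1 k1 x2 y2 k2 where w: "w1 = (x1, y1)" "w2 = (x2, y2)"
      and x: "x1 \<in> Xs" "x2 \<in> Xs" and y: "y1 \<in> Ys" "y2 \<in> Ys" and k: "k1 \<in> carrier K" "k2 \<in> carrier K"
      and xe: "x1 = c k1 \<otimes>\<^bsub>?AG\<^esub> y1" "x2 = c k2 \<otimes>\<^bsub>?AG\<^esub> y2" by (auto simp: W_def)
    have yc: "y1 \<in> carrier ?AG" "y2 \<in> carrier ?AG" using y Yc by auto
    have "x1 \<otimes>\<^bsub>?AG\<^esub> x2 = c (k1 \<otimes>\<^bsub>K\<^esub> y1 k2) \<otimes>\<^bsub>?AG\<^esub> (y1 \<otimes>\<^bsub>?AG\<^esub> y2)"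
      using xe pf k yc by simp
    moreover have "k1 \<otimes>\<^bsub>K\<^esub> y1 k2 \<in> carrier K" using k acl yc by simp
    moreover have "x1 \<otimes>\<^bsub>?AG\<^esub> x2 \<in> Xs" "y1 \<otimes>\<^bsub>?AG\<^esub> y2 \<in> Ys"
      using x y sX sY by (auto simp: subgroup.m_closed)
    ultimately show "w1 \<otimes>\<^bsub>D\<^esub> w2 \<in> W"
      unfolding w multD W_def by blast
  qed

  have fstW: "fst ` W = Xs"
  proof
    show "fst ` W \<subseteq> Xs" by (auto simp: W_def)
    show "Xs \<subseteq> fst ` W"
    proof
      fix x assume x: "x \<in> Xs"
      have "x = x \<otimes>\<^bsub>?AG\<^esub> \<one>\<^bsub>?AG\<^esub>" using x Xc by auto
      then have "x \<in> Xs <#>\<^bsub>?AG\<^esub> Ys" using x sY subgroup.one_closed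
        unfolding set_mult_def by fastforce
      then have "x \<in> Ys <#>\<^bsub>?AG\<^esub> Inn K" using e2 by simp
      then obtain y k where y: "y \<in> Ys" and k: "k \<in> carrier K" and xe: "x = y \<otimes>\<^bsub>?AG\<^esub> c k"
        unfolding set_mult_def innK by auto
      have "x = c (y k) \<otimes>\<^bsub>?AG\<^esub> y" using xe auc y Yc k by auto
      moreover have "y k \<in> carrier K" using acl y Yc k by auto
      ultimately have "(x, y) \<in> W" using x y by (auto simp: W_def)
      then show "x \<in> fst ` W" by force
    qed
  qed
  have sndW: "snd ` W = Ys"
  proof
    show "snd ` W \<subseteq> Ys" by (auto simp: W_def)
    show "Ys \<subseteq> snd ` W"
    proof
      fix y assume y: "y \<in> Ys"
      have yc: "y \<in> carrier ?AG" using y Yc by auto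
      have "y = \<one>\<^bsub>?AG\<^esub> \<otimes>\<^bsub>?AG\<^esub> y" using yc by auto
      then have "y \<in> Xs <#>\<^bsub>?AG\<^esub> Ys" using y sX subgroup.one_closed
        unfolding set_mult_def by fastforce
      then have "y \<in> Xs <#>\<^bsub>?AG\<^esub> Inn K" using e1 by simp
      then obtain x k where x: "x \<in> Xs" and k: "k \<in> carrier K" and ye: "y = x \<otimes>\<^bsub>?AG\<^esub> c k"
        unfolding set_mult_def innK by auto
      have xc: "x \<in> carrier ?AG" using x Xc by auto
      have xk: "x k \<in> carrier K" using acl xc k by auto
      have "y = c (x k) \<otimes>\<^bsub>?AG\<^esub> x" using ye auc xc k by auto
      then have "x = inv\<^bsub>?AG\<^esub> (c (x k)) \<otimes>\<^bsub>?AG\<^esub> y"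
        using AG.inv_solve_left[OF xc cc[OF xk] yc] by blast
      then have "x = c (inv\<^bsub>K\<^esub> (x k)) \<otimes>\<^bsub>?AG\<^esub> y"
        using cinv[OF xk] by simp
      moreover have "inv\<^bsub>K\<^esub> (x k) \<in> carrier K" using xk by simp
      ultimately have "(x, y) \<in> W" using x y unfolding W_def by blast
      then show "y \<in> snd ` W" by force
    qed
  qed

  define \<phi> where "\<phi> w = (THE k. k \<in> carrier K \<and> fst w = c k \<otimes>\<^bsub>?AG\<^esub> snd w)" for w
  have phi_eq: "\<phi> (c k \<otimes>\<^bsub>?AG\<^esub> y, y) = k" if k: "k \<in> carrier K" and y: "y \<in> carrier ?AG" for k y
    unfolding \<phi>_def
  proof (rule the_equality)
    show "k \<in> carrier K \<and> fst (c k \<otimes>\<^bsub>?AG\<^esub> y, y) = c k \<otimes>\<^bsub>?AG\<^esub> snd (c k \<otimes>\<^bsub>?AG\<^esub> y, y)"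
      using k by simp
    fix k' assume "k' \<in> carrier K \<and> fst (c k \<otimes>\<^bsub>?AG\<^esub> y, y) = c k' \<otimes>\<^bsub>?AG\<^esub> snd (c k \<otimes>\<^bsub>?AG\<^esub> y, y)"
    then have k': "k' \<in> carrier K" and "c k \<otimes>\<^bsub>?AG\<^esub> y = c k' \<otimes>\<^bsub>?AG\<^esub> y" by auto
    then have "c k = c k'" using cc k y by simp
    then show "k' = k" using cinj k k' by metis
  qed
  have phiW: "\<phi> \<in> W \<rightarrow> carrier K"
    using phi_eq Yc by (auto simp: W_def)
  have injphi: "inj_on \<phi> W"
  proof
    fix w1 w2 assume "w1 \<in> W" "w2 \<in> W" and pe: "\<phi> w1 = \<phi> w2"
    then obtain x1 y1 k1 x2 y2 k2 where w: "w1 = (x1, y1)" "w2 = (x2, y2)"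
      and x: "x1 \<in> Xs" "x2 \<in> Xs" and y: "y1 \<in> Ys" "y2 \<in> Ys" and k: "k1 \<in> carrier K" "k2 \<in> carrier K"
      and xe: "x1 = c k1 \<otimes>\<^bsub>?AG\<^esub> y1" "x2 = c k2 \<otimes>\<^bsub>?AG\<^esub> y2" by (auto simp: W_def)
    have yc: "y1 \<in> carrier ?AG" "y2 \<in> carrier ?AG" using y Yc by auto
    have "k1 = k2" using pe w xe phi_eq k yc by simp
    have "inv\<^bsub>?AG\<^esub> x2 \<otimes>\<^bsub>?AG\<^esub> x1 = inv\<^bsub>?AG\<^esub> y2 \<otimes>\<^bsub>?AG\<^esub> y1"
      using xe \<open>k1 = k2\<close> cc k yc by (simp add: AG.inv_mult_group AG.m_assoc)
    moreover have "inv\<^bsub>?AG\<^esub> x2 \<otimes>\<^bsub>?AG\<^esub> x1 \<in> Xs" using x sX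
      by (simp add: subgroup.m_closed subgroup.m_inv_closed)
    moreover have "inv\<^bsub>?AG\<^esub> y2 \<otimes>\<^bsub>?AG\<^esub> y1 \<in> Ys" using y sY
      by (simp add: subgroup.m_closed subgroup.m_inv_closed)
    ultimately have "inv\<^bsub>?AG\<^esub> y2 \<otimes>\<^bsub>?AG\<^esub> y1 = \<one>\<^bsub>?AG\<^esub>" using XY by auto
    then have "y1 = y2 \<otimes>\<^bsub>?AG\<^esub> \<one>\<^bsub>?AG\<^esub>"
      using AG.inv_solve_left'[OF AG.one_closed yc(2) yc(1)] by blast
    then have "y1 = y2" using yc by simp
    then show "w1 = w2" using w xe \<open>k1 = k2\<close> by simp
  qed
  have surjphi: "\<phi> ` W = carrier K"
  proof
    show "\<phi> ` W \<subseteq> carrier K" using phiW by auto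
    show "carrier K \<subseteq> \<phi> ` W"
    proof
      fix k assume k: "k \<in> carrier K"
      have "c k = \<one>\<^bsub>?AG\<^esub> \<otimes>\<^bsub>?AG\<^esub> c k" using cc k by simp
      then have "c k \<in> Xs <#>\<^bsub>?AG\<^esub> Inn K" using sX subgroup.one_closed k
        unfolding set_mult_def innK by fastforce
      then have "c k \<in> Xs <#>\<^bsub>?AG\<^esub> Ys" using e1 by simp
      then obtain x y where x: "x \<in> Xs" and y: "y \<in> Ys" and ke: "c k = x \<otimes>\<^bsub>?AG\<^esub> y"
        unfolding set_mult_def by auto
      have yc: "y \<in> carrier ?AG" using y Yc by auto
      have xe: "x = c k \<otimes>\<^bsub>?AG\<^esub> inv\<^bsub>?AG\<^esub> y" using ke x Xc yc by (metis AG.inv_solve_right' AG.m_closed cc k subsetD)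
      have iy: "inv\<^bsub>?AG\<^esub> y \<in> Ys" using sY y by (simp add: subgroup.m_inv_closed)
      have "(x, inv\<^bsub>?AG\<^esub> y) \<in> W" using x iy xe k by (auto simp: W_def)
      moreover have "\<phi> (x, inv\<^bsub>?AG\<^esub> y) = k" using xe phi_eq k yc by simp
      ultimately show "k \<in> \<phi> ` W" by force
    qed
  qed
  have bijphi: "bij_betw \<phi> W (carrier K)" using injphi surjphi by (simp add: bij_betw_def)

  define \<psi> where "\<psi> = inv_into W \<phi>"
  define M where "M = \<lparr>carrier = carrier K, monoid.mult = (\<lambda>a b. \<phi> (\<psi> a \<otimes>\<^bsub>D\<^esub> \<psi> b)), one = \<one>\<^bsub>K\<^esub>\<rparr>"
  define D' where "D' = D\<lparr>carrier := W\<rparr>"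
  have gD': "group D'" unfolding D'_def using subW D.subgroup_imp_group by blast
  interpret D': group D' by (rule gD')
  have psiW: "a \<in> carrier K \<Longrightarrow> \<psi> a \<in> W" for a
    unfolding \<psi>_def using surjphi by (metis inv_into_into)
  have phipsi: "a \<in> carrier K \<Longrightarrow> \<phi> (\<psi> a) = a" for a
    unfolding \<psi>_def using surjphi by (metis f_inv_into_f)
  have psiphi: "w \<in> W \<Longrightarrow> \<psi> (\<phi> w) = w" for w
    unfolding \<psi>_def using injphi by (rule inv_into_f_f)
  have isophi: "\<phi> \<in> iso D' M"
    unfolding iso_def hom_def
  proof (intro CollectI conjI ballI)
    show "\<phi> \<in> carrier D' \<rightarrow> carrier M" using phiW by (simp add: D'_def M_def)
    show "bij_betw \<phi> (carrier D') (carrier M)" using bijphi by (simp add: D'_def M_def)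
    fix u v assume "u \<in> carrier D'" "v \<in> carrier D'"
    then show "\<phi> (u \<otimes>\<^bsub>D'\<^esub> v) = \<phi> u \<otimes>\<^bsub>M\<^esub> \<phi> v"
      by (simp add: D'_def M_def psiphi)
  qed
  have phione: "\<phi> \<one>\<^bsub>D'\<^esub> = \<one>\<^bsub>K\<^esub>"
    using phi_eq[of "\<one>\<^bsub>K\<^esub>" "\<one>\<^bsub>?AG\<^esub>"] cone oneD by (simp add: D'_def)
  have gM: "group M"
    using D'.iso_imp_img_group[OF isophi] phione by (simp add: M_def)
  have MD: "M \<cong> D'"
    using isophi D'.iso_sym unfolding is_iso_def by blast

  have psiform: "\<exists>y\<in>Ys. \<psi> a = (c a \<otimes>\<^bsub>?AG\<^esub> y, y)" if a: "a \<in> carrier K" for a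
  proof -
    obtain x y k where p: "\<psi> a = (x, y)" and y: "y \<in> Ys" and k: "k \<in> carrier K"
      and xe: "x = c k \<otimes>\<^bsub>?AG\<^esub> y" using psiW[OF a] by (auto simp: W_def)
    have "k = a" using phipsi[OF a] p xe phi_eq k y Yc by auto
    then show ?thesis using p xe y by auto
  qed
  have multM: "\<exists>y\<in>Ys. \<forall>b\<in>carrier K. a \<otimes>\<^bsub>M\<^esub> b = a \<otimes>\<^bsub>K\<^esub> y b" if a: "a \<in> carrier K" for a
  proof -
    obtain y where y: "y \<in> Ys" and pa: "\<psi> a = (c a \<otimes>\<^bsub>?AG\<^esub> y, y)" using psiform[OF a] by blast
    have yc: "y \<in> carrier ?AG" using y Yc by auto
    have "a \<otimes>\<^bsub>M\<^esub> b = a \<otimes>\<^bsub>K\<^esub> y b" if b: "b \<in> carrier K" for b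
    proof -
      obtain y' where y': "y' \<in> Ys" and pb: "\<psi> b = (c b \<otimes>\<^bsub>?AG\<^esub> y', y')" using psiform[OF b] by blast
      have yc': "y' \<in> carrier ?AG" using y' Yc by auto
      have "a \<otimes>\<^bsub>M\<^esub> b = \<phi> (c (a \<otimes>\<^bsub>K\<^esub> y b) \<otimes>\<^bsub>?AG\<^esub> (y \<otimes>\<^bsub>?AG\<^esub> y'), y \<otimes>\<^bsub>?AG\<^esub> y')"
        using pa pb multD pf a b yc yc' by (simp add: M_def)
      also have "\<dots> = a \<otimes>\<^bsub>K\<^esub> y b" using phi_eq a b acl yc yc' by simp
      finally show ?thesis .
    qed
    then show ?thesis using y by blast
  qed

  define A where "A = \<lparr>carrier = carrier K, monoid.mult = monoid.mult K, one = \<one>\<^bsub>K\<^esub>\<rparr>"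
  have isoA: "(\<lambda>x. x) \<in> iso K A"
    by (auto simp: iso_def hom_def A_def bij_betw_def)
  have gA: "group A"
    using K.iso_imp_img_group[OF isoA] by (simp add: A_def)
  have AK: "A \<cong> K"
    using K.iso_sym isoA unfolding is_iso_def by blast
  have invA: "inv\<^bsub>A\<^esub> a = inv\<^bsub>K\<^esub> a" for a
    by (simp add: A_def m_inv_def)

  have brace: "skew_left_brace A M"
    unfolding skew_left_brace_def
  proof (intro conjI ballI)
    show "group A" by (rule gA)
    show "group M" by (rule gM)
    show "carrier A = carrier M" by (simp add: A_def M_def)
    fix a b d assume a: "a \<in> carrier A" and b: "b \<in> carrier A" and d: "d \<in> carrier A"
    then have a': "a \<in> carrier K" and b': "b \<in> carrier K" and d': "d \<in> carrier K" by (auto simp: A_def)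
    obtain y where y: "y \<in> Ys" and my: "\<forall>b\<in>carrier K. a \<otimes>\<^bsub>M\<^esub> b = a \<otimes>\<^bsub>K\<^esub> y b"
      using multM[OF a'] by blast
    have yc: "y \<in> carrier ?AG" using y Yc by auto
    have yb: "y b \<in> carrier K" and yd: "y d \<in> carrier K" using acl yc b' d' by auto
    have "a \<otimes>\<^bsub>M\<^esub> (b \<otimes>\<^bsub>A\<^esub> d) = a \<otimes>\<^bsub>K\<^esub> (y b \<otimes>\<^bsub>K\<^esub> y d)"
      using my b' d' K.auto_mult[OF yc b' d'] by (simp add: A_def)
    also have "\<dots> = (a \<otimes>\<^bsub>K\<^esub> y b) \<otimes>\<^bsub>K\<^esub> inv\<^bsub>K\<^esub> a \<otimes>\<^bsub>K\<^esub> (a \<otimes>\<^bsub>K\<^esub> y d)"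
      using a' yb yd by (simp add: K.m_assoc)
    also have "\<dots> = (a \<otimes>\<^bsub>M\<^esub> b) \<otimes>\<^bsub>A\<^esub> inv\<^bsub>A\<^esub> a \<otimes>\<^bsub>A\<^esub> (a \<otimes>\<^bsub>M\<^esub> d)"
      using my b' d' invA by (simp add: A_def)
    finally show "a \<otimes>\<^bsub>M\<^esub> (b \<otimes>\<^bsub>A\<^esub> d) = (a \<otimes>\<^bsub>M\<^esub> b) \<otimes>\<^bsub>A\<^esub> inv\<^bsub>A\<^esub> a \<otimes>\<^bsub>A\<^esub> (a \<otimes>\<^bsub>M\<^esub> d)" .
  qed
  have sd: "subdirect_product H1 H2 W"
    unfolding subdirect_product_def using subW fstW sndW by (simp add: D_def H1_def H2_def)
  show ?thesis
    using brace AK sd MD unfolding H1_def H2_def D'_def D_def by blast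
qed

end
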